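(* Let $\mathcal B$ be a connected building set on $[n+1]$ whose nested set complex $K_{\mathcal B}$ is a flag complex, and let $I\subseteq[n+1]$ have even cardinality. If the restricted building set $\mathcal B|_I$ has a connected component of odd cardinality, then $K^{\mathrm{odd}}_{\mathcal B|_I}$ is contractible (indeed a cone).
   Context: A building set on a finite set $S\subset\mathbb N$ is a collection $\mathcal B$ of nonempty subsets of $S$ containing every singleton, such that $I,J\in\mathcal B$, $I\cap J\neq\emptyset$ imply $I\cup J\in\mathcal B$; its connected components are its inclusion-maximal elements; it is connected if $S\in\mathcal B$; $\mathcal B|_I=\{J\in\mathcal B:J\subseteq I\}$. For a connected building set $\mathcal B$ on $[n+1]$, the nested set complex $K_{\mathcal B}$ is the simplicial complex on vertex set $\mathcal B\setminus\{[n+1]\}$ whose simplices are the subsets $N\subseteq\mathcal B\setminus\{[n+1]\}$ such that (i) any $I,J\in N$ satisfy $I\subseteq J$, $J\subseteq I$ or $I\cap J=\emptyset$, and (ii) for any $r\ge2$ pairwise disjoint $I_1,\dots,I_r\in N$, $I_1\cup\dots\cup I_r\notin\mathcal B$. A simplicial complex is flag if every set of vertices that are pairwise joined by edges forms a simplex. For $I\subseteq[n+1]$ of even cardinality, $K^{\mathrm{odd}}_{\mathcal B|_I}$ is the full subcomplex of $K_{\mathcal B}$ induced on the vertices $J\in\mathcal B$ with $J\subseteq I$ and $|J|$ odd. *)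

theory Defs
  imports Main
begin

definition building_set :: "nat set \<Rightarrow> nat set set \<Rightarrow> bool" where
  "building_set S B \<longleftrightarrow> finite S \<and> (\<forall>J\<in>B. J \<noteq> {} \<and> J \<subseteq> S) \<and> (\<forall>i\<in>S. {i} \<in> B) \<and>
     (\<forall>I\<in>B. \<forall>J\<in>B. I \<inter> J \<noteq> {} \<longrightarrow> I \<union> J \<in> B)"

definition components :: "nat set set \<Rightarrow> nat set set" where
  "components B = {C \<in> B. \<forall>J\<in>B. C \<subseteq> J \<longrightarrow> J = C}"

definition connected_bset :: "nat set \<Rightarrow> nat set set \<Rightarrow> bool" where
  "connected_bset S B \<longleftrightarrow> S \<in> B"

definition restrict_bset :: "nat set set \<Rightarrow> nat set \<Rightarrow> nat set set" where
  "restrict_bset B I = {J \<in> B. J \<subseteq> I}"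

definition nested_vertices :: "nat set \<Rightarrow> nat set set \<Rightarrow> nat set set" where
  "nested_vertices S B = B - {S}"

definition nested_complex :: "nat set \<Rightarrow> nat set set \<Rightarrow> nat set set set" where
  "nested_complex S B = {N. N \<subseteq> nested_vertices S B \<and>
     (\<forall>I\<in>N. \<forall>J\<in>N. I \<subseteq> J \<or> J \<subseteq> I \<or> I \<inter> J = {}) \<and>
     (\<forall>M\<subseteq>N. 2 \<le> card M \<and> (\<forall>I\<in>M. \<forall>J\<in>M. I \<noteq> J \<longrightarrow> I \<inter> J = {}) \<longrightarrow> \<Union>M \<notin> B)}"

definition flag_complex :: "'v set \<Rightarrow> 'v set set \<Rightarrow> bool" where
  "flag_complex V K \<longleftrightarrow> (\<forall>N\<subseteq>V. (\<forall>x\<in>N. \<forall>y\<in>N. x \<noteq> y \<longrightarrow> {x, y} \<in> K) \<longrightarrow> N \<in> K)"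

definition full_subcomplex :: "'v set set \<Rightarrow> 'v set \<Rightarrow> 'v set set" where
  "full_subcomplex K W = {\<sigma> \<in> K. \<sigma> \<subseteq> W}"

definition odd_complex :: "nat set \<Rightarrow> nat set set \<Rightarrow> nat set \<Rightarrow> nat set set set" where
  "odd_complex S B I = full_subcomplex (nested_complex S B)
      {J \<in> nested_vertices S B. J \<subseteq> I \<and> odd (card J)}"

definition is_cone :: "'v set set \<Rightarrow> bool" where
  "is_cone K \<longleftrightarrow> (\<exists>v. {v} \<in> K \<and> (\<forall>\<sigma>\<in>K. insert v \<sigma> \<in> K))"

end

theory Submission
  imports Defs
begin

lemma card_sub1: "M \<subseteq> {a} \<Longrightarrow> card M \<le> 1"
  by (drule subset_singletonD) auto

lemma face_subset:
  assumes "N \<in> nested_complex S B" "N' \<subseteq> N"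
  shows "N' \<in> nested_complex S B"
proof -
  have a: "N \<subseteq> nested_vertices S B" "\<forall>I\<in>N. \<forall>J\<in>N. I \<subseteq> J \<or> J \<subseteq> I \<or> I \<inter> J = {}"
    "\<forall>M\<subseteq>N. 2 \<le> card M \<and> (\<forall>I\<in>M. \<forall>J\<in>M. I \<noteq> J \<longrightarrow> I \<inter> J = {}) \<longrightarrow> \<Union>M \<notin> B"
    using assms(1) unfolding nested_complex_def by simp_all
  show ?thesis unfolding nested_complex_def
  proof (intro CollectI conjI ballI allI impI)
    show "N' \<subseteq> nested_vertices S B" using a(1) assms(2) by (rule subset_trans[rotated])
  next
    fix I J assume "I \<in> N'" "J \<in> N'"
    then show "I \<subseteq> J \<or> J \<subseteq> I \<or> I \<inter> J = {}" using a(2) assms(2) by blast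
  next
    fix M assume "M \<subseteq> N'" "2 \<le> card M \<and> (\<forall>I\<in>M. \<forall>J\<in>M. I \<noteq> J \<longrightarrow> I \<inter> J = {})"
    moreover have "M \<subseteq> N" using \<open>M \<subseteq> N'\<close> assms(2) by (rule subset_trans)
    ultimately show "\<Union>M \<notin> B" using a(3) by blast
  qed
qed

theorem lemma5p3:
  fixes n :: nat and B :: "nat set set" and I :: "nat set"
  assumes "building_set {1..n+1} B"
    and "connected_bset {1..n+1} B"
    and "flag_complex (nested_vertices {1..n+1} B) (nested_complex {1..n+1} B)"
    and "I \<subseteq> {1..n+1}"
    and "even (card I)"
    and "\<exists>C\<in>components (restrict_bset B I). odd (card C)"
  shows "is_cone (odd_complex {1..n+1} B I)"
proof -
  let ?S = "{1..n+1::nat}"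
  obtain C where C: "C \<in> components (restrict_bset B I)" "odd (card C)" using assms(6) by blast
  have CB: "C \<in> B" and CI: "C \<subseteq> I" and Cmax: "\<And>J. J \<in> B \<Longrightarrow> J \<subseteq> I \<Longrightarrow> C \<subseteq> J \<Longrightarrow> J = C"
    using C(1) unfolding components_def restrict_bset_def by auto
  have CS: "C \<noteq> ?S"
  proof
    assume "C = ?S"
    then have "C = I" using CI assms(4) by blast
    then show False using C(2) assms(5) by simp
  qed
  have CV: "C \<in> nested_vertices ?S B" using CB CS unfolding nested_vertices_def by simp
  have bs: "\<And>J. J \<in> B \<Longrightarrow> J \<noteq> {}" "\<And>I J. I \<in> B \<Longrightarrow> J \<in> B \<Longrightarrow> I \<inter> J \<noteq> {} \<Longrightarrow> I \<union> J \<in> B"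
    using assms(1) unfolding building_set_def by blast+
  have pair: "{C, J} \<in> nested_complex ?S B" if J: "J \<in> nested_vertices ?S B" "J \<subseteq> I" "J \<noteq> C" for J
  proof -
    have JB: "J \<in> B" using J unfolding nested_vertices_def by simp
    have Jne: "J \<noteq> {}" using bs(1) JB by blast
    have nest: "J \<subseteq> C \<or> J \<inter> C = {}"
    proof (cases "J \<inter> C = {}")
      case False
      then have "J \<union> C \<in> B" using bs(2) JB CB by blast
      then have "J \<union> C = C" using Cmax J(2) CI by blast
      then show ?thesis by blast
    qed simp
    have nodisj: "C \<union> J \<notin> B \<or> C \<inter> J \<noteq> {}"
    proof (rule ccontr)
      assume "\<not> ?thesis"
      then have "C \<union> J \<in> B" "C \<inter> J = {}" by auto
      then have "C \<union> J = C" using Cmax J(2) CI by blast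
      then show False using \<open>C \<inter> J = {}\<close> Jne by blast
    qed
    show ?thesis unfolding nested_complex_def
    proof (intro CollectI conjI ballI allI impI)
      show "{C, J} \<subseteq> nested_vertices ?S B" using CV J(1) by simp
    next
      fix X Y assume "X \<in> {C, J}" "Y \<in> {C, J}"
      then show "X \<subseteq> Y \<or> Y \<subseteq> X \<or> X \<inter> Y = {}" using nest by blast
    next
      fix M assume M: "M \<subseteq> {C, J}" "2 \<le> card M \<and> (\<forall>X\<in>M. \<forall>Y\<in>M. X \<noteq> Y \<longrightarrow> X \<inter> Y = {})"
      have "M = {C, J}"
      proof (rule ccontr)
        assume "M \<noteq> {C, J}"
        then have "M \<subseteq> {C} \<or> M \<subseteq> {J}" using M(1) by blast
        then have "card M \<le> 1"
          by (metis card_sub1)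
        then show False using M(2) by simp
      qed
      moreover have "C \<inter> J = {}" using M(2) J(3) \<open>M = {C, J}\<close> by blast
      ultimately show "\<Union>M \<notin> B" using nodisj by simp
    qed
  qed
  show ?thesis unfolding is_cone_def
  proof (intro exI conjI ballI)
    show "{C} \<in> odd_complex ?S B I"
      unfolding odd_complex_def full_subcomplex_def nested_complex_def
    proof (intro CollectI conjI ballI allI impI)
      fix M assume M: "M \<subseteq> {C}" "2 \<le> card M \<and> (\<forall>X\<in>M. \<forall>Y\<in>M. X \<noteq> Y \<longrightarrow> X \<inter> Y = {})"
      have "card M \<le> 1" using M(1) by (rule card_sub1)
      then show "\<Union>M \<notin> B" using M(2) by simp
    next
      show "{C} \<subseteq> nested_vertices ?S B" using CV by simp
    next
      fix X Y assume "X \<in> {C}" "Y \<in> {C}" then show "X \<subseteq> Y \<or> Y \<subseteq> X \<or> X \<inter> Y = {}" by simp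
    next
      show "{C} \<subseteq> {J \<in> nested_vertices ?S B. J \<subseteq> I \<and> odd (card J)}" using CV CI C(2) by simp
    qed
  next
    fix \<sigma> assume s: "\<sigma> \<in> odd_complex ?S B I"
    have sK: "\<sigma> \<in> nested_complex ?S B" and sW: "\<sigma> \<subseteq> {J \<in> nested_vertices ?S B. J \<subseteq> I \<and> odd (card J)}"
      using s unfolding odd_complex_def full_subcomplex_def by auto
    have fl: "\<forall>N\<subseteq>nested_vertices ?S B. (\<forall>x\<in>N. \<forall>y\<in>N. x \<noteq> y \<longrightarrow> {x, y} \<in> nested_complex ?S B) \<longrightarrow> N \<in> nested_complex ?S B"
      using assms(3) unfolding flag_complex_def .
    have "insert C \<sigma> \<in> nested_complex ?S B"
    proof -
      have "insert C \<sigma> \<subseteq> nested_vertices ?S B" using CV sW by blast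
      moreover have "\<forall>x\<in>insert C \<sigma>. \<forall>y\<in>insert C \<sigma>. x \<noteq> y \<longrightarrow> {x, y} \<in> nested_complex ?S B"
      proof (intro ballI impI)
        fix x y assume xy: "x \<in> insert C \<sigma>" "y \<in> insert C \<sigma>" "x \<noteq> y"
        show "{x, y} \<in> nested_complex ?S B"
        proof (cases "x = C")
          case True
          then have "y \<in> \<sigma>" "y \<noteq> C" using xy by auto
          then have "y \<in> {J \<in> nested_vertices ?S B. J \<subseteq> I \<and> odd (card J)}" using sW by (simp add: subset_iff)
          then have "{C, y} \<in> nested_complex ?S B" using pair[of y] \<open>y \<noteq> C\<close> by simp
          then show ?thesis using True by simp
        next
          case False
          note xs = this
          show ?thesis
          proof (cases "y = C")
            case True
            then have "x \<in> \<sigma>" using xy xs by auto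
            then have "x \<in> {J \<in> nested_vertices ?S B. J \<subseteq> I \<and> odd (card J)}" using sW by (simp add: subset_iff)
            then have "{C, x} \<in> nested_complex ?S B" using pair[of x] xs by simp
            then show ?thesis using True by (simp add: insert_commute)
          next
            case False
            then have "{x, y} \<subseteq> \<sigma>" using xy xs by auto
            then show ?thesis by (rule face_subset[OF sK])
          qed
        qed
      qed
      ultimately show "insert C \<sigma> \<in> nested_complex ?S B" by (rule fl[THEN spec, THEN mp, THEN mp])
    qed
    then show "insert C \<sigma> \<in> odd_complex ?S B I"
      unfolding odd_complex_def full_subcomplex_def
    proof (intro CollectI conjI)
      show "insert C \<sigma> \<subseteq> {J \<in> nested_vertices ?S B. J \<subseteq> I \<and> odd (card J)}"
        using sW CV CI C(2) by simp
    qed assumption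
  qed
qed

end
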